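(* Let $d\ge1$ and let $G:\mathbb{R}^d\to\mathbb{R}$ satisfy: $G\ge 0$ and $\mathrm{supp}(G)=\mathbb{R}^d$; $G\in W^{1,1}(\mathbb{R}^d)\cap L^\infty(\mathbb{R}^d)\cap C^2(\mathbb{R}^d)$; $G(x)=g(|x|)$ with $g'(r)<0$ for all $r>0$, $g''(0)<0$, $\lim_{r\to+\infty}g(r)=0$; and $\int_{\mathbb{R}^d}G\,dx=1$. Let $0<\varepsilon<1$ and $$E[\rho]=\frac{\varepsilon}{2}\int_{\mathbb{R}^d}\rho^2\,dx-\frac12\int_{\mathbb{R}^d}\int_{\mathbb{R}^d}G(x-y)\rho(x)\rho(y)\,dy\,dx.$$ Then $\inf_{\rho\in\mathcal{P}\cap L^2(\mathbb{R}^d)}E[\rho]<0$.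
   Context: $\mathcal{P}=\{\rho\in L^1(\mathbb{R}^d):\rho\ge0,\ \int_{\mathbb{R}^d}\rho\,dx=1\}$. $\varepsilon>0$ is a diffusion constant. *)

theory Defs
  imports "HOL-Analysis.Analysis"
begin

text \<open>Admissible densities: elements of P intersected with L^2 on the Euclidean space 'a
  (any Borel representative, pointwise nonnegative).\<close>
definition adm_density :: "('a::euclidean_space \<Rightarrow> real) \<Rightarrow> bool" where
  "adm_density \<rho> \<longleftrightarrow> \<rho> \<in> borel_measurable lborel \<and> (\<forall>x. 0 \<le> \<rho> x)
     \<and> integrable lborel \<rho> \<and> (LINT x|lborel. \<rho> x) = 1
     \<and> integrable lborel (\<lambda>x. (\<rho> x)\<^sup>2)"

definition energy :: "real \<Rightarrow> ('a::euclidean_space \<Rightarrow> real) \<Rightarrow> ('a \<Rightarrow> real) \<Rightarrow> real" where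
  "energy \<epsilon> G \<rho> = \<epsilon> / 2 * (LINT x|lborel. (\<rho> x)\<^sup>2)
     - 1/2 * (LINT x|lborel. (LINT y|lborel. G (x - y) * \<rho> x * \<rho> y))"

end

theory Submission imports Defs begin
lemma lborel_reflect:
  fixes x :: "'a::euclidean_space"
  shows "distr lborel borel (\<lambda>y. x - y) = lborel"
proof -
  have "lborel = density (distr lborel borel (\<lambda>y. x + (-1::real) *\<^sub>R y)) (\<lambda>_. \<bar>-1::real\<bar>^DIM('a))"
    by (rule lborel_affine) simp
  then show ?thesis by (simp add: density_1)
qed

lemma trans_int:
  fixes h :: "'a::euclidean_space \<Rightarrow> real"
  assumes h: "integrable lborel h"
  shows "integrable lborel (\<lambda>y. h (x - y))" "(LINT y|lborel. h (x - y)) = (LINT y|lborel. h y)"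
proof -
  have m: "h \<in> borel_measurable borel" using borel_measurable_integrable[OF h] by simp
  have mm: "(\<lambda>y. x - y) \<in> measurable lborel borel" by simp
  show "integrable lborel (\<lambda>y. h (x - y))"
    using integrable_distr_eq[OF mm m] h lborel_reflect[of x] by simp
  show "(LINT y|lborel. h (x - y)) = (LINT y|lborel. h y)"
    using integral_distr[OF mm m] lborel_reflect[of x] by simp
qed

lemma box_mem: "(z::'a::euclidean_space) \<in> cbox (-r *\<^sub>R One) (r *\<^sub>R One) \<longleftrightarrow> (\<forall>b\<in>Basis. \<bar>z \<bullet> b\<bar> \<le> r)"
  by (auto simp: mem_box abs_le_iff inner_simps)

lemma box_meas: "0 \<le> r \<Longrightarrow> measure lborel (cbox (-r *\<^sub>R One) (r *\<^sub>R One) :: 'a::euclidean_space set) = (2*r)^DIM('a)"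
  by (simp add: inner_simps)

lemma step1:
  fixes G :: "'a::euclidean_space \<Rightarrow> real"
  assumes G_nonneg: "\<forall>x. 0 \<le> G x" and G_L1: "integrable lborel G"
  shows "(\<lambda>k::nat. LINT z|lborel. indicator (cbox (-real k *\<^sub>R One) (real k *\<^sub>R One)) z * G z)
     \<longlonglongrightarrow> (LINT z|lborel. G z)"
proof (rule integral_dominated_convergence[where w=G])
  have [measurable]: "G \<in> borel_measurable borel" using borel_measurable_integrable[OF G_L1] by simp
  show "G \<in> borel_measurable lborel" by simp
  show "(\<lambda>z. indicator (cbox (-real k *\<^sub>R One) (real k *\<^sub>R One)) z * G z) \<in> borel_measurable lborel" for k
    by simp
  show "integrable lborel G" by fact
  show "AE z in lborel. norm (indicator (cbox (-real k *\<^sub>R One) (real k *\<^sub>R One)) z * G z) \<le> G z" for k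
    using G_nonneg by (auto simp: indicator_def)
  show "AE z in lborel. (\<lambda>k. indicator (cbox (-real k *\<^sub>R One) (real k *\<^sub>R One)) z * G z) \<longlonglongrightarrow> G z"
  proof (rule AE_I2, rule tendsto_eventually)
    fix z :: 'a
    obtain N :: nat where N: "norm z \<le> real N" using real_arch_simple by blast
    show "\<forall>\<^sub>F k in sequentially. indicator (cbox (-real k *\<^sub>R One) (real k *\<^sub>R One)) z * G z = G z"
    proof (rule eventually_sequentiallyI[of N])
      fix k assume "N \<le> k"
      then have "norm z \<le> real k" using N by linarith
      then have "z \<in> cbox (-real k *\<^sub>R One) (real k *\<^sub>R One)"
        unfolding box_mem using Basis_le_norm order_trans by blast
      then show "indicator (cbox (-real k *\<^sub>R One) (real k *\<^sub>R One)) z * G z = G z" by simp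
    qed
  qed
qed

theorem lemma3p7:
  fixes G :: "'a::euclidean_space \<Rightarrow> real"
    and G' :: "'a \<Rightarrow> 'a"
    and G'' :: "'a \<Rightarrow> 'a \<Rightarrow>\<^sub>L 'a"
    and g g' :: "real \<Rightarrow> real"
    and g''0 :: real
    and \<epsilon> :: real
  assumes G_nonneg: "\<forall>x. 0 \<le> G x"
    and G_supp: "closure {x. G x \<noteq> 0} = UNIV"
    and G_deriv: "\<forall>x. (G has_derivative (\<lambda>h. G' x \<bullet> h)) (at x)"
    and G'_deriv: "\<forall>x. (G' has_derivative blinfun_apply (G'' x)) (at x)"
    and G''_cont: "continuous_on UNIV G''"
    and G_L1: "integrable lborel G"
    and G'_L1: "integrable lborel G'"
    and G_Linf: "bounded (range G)"
    and G_radial: "\<forall>x. G x = g (norm x)"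
    and g_deriv: "\<forall>r\<ge>0. (g has_real_derivative g' r) (at r within {0..})"
    and g'_neg: "\<forall>r>0. g' r < 0"
    and g''_0: "(g' has_real_derivative g''0) (at 0 within {0..})"
    and g''0_neg: "g''0 < 0"
    and g_lim: "(g \<longlongrightarrow> 0) at_top"
    and G_int: "(LINT x|lborel. G x) = 1"
    and eps: "0 < \<epsilon>" "\<epsilon> < 1"
  shows "\<exists>\<rho>. adm_density \<rho> \<and> energy \<epsilon> G \<rho> < 0"
proof -
  define Q :: "real \<Rightarrow> 'a set" where "Q r = cbox (-r *\<^sub>R One) (r *\<^sub>R One)" for r
  define n where "n = DIM('a)"
  have [measurable]: "G \<in> borel_measurable borel" using borel_measurable_integrable[OF G_L1] by simp
  have Qm[measurable]: "Q r \<in> sets lborel" for r unfolding Q_def by simp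
  have Qmeas: "0 \<le> r \<Longrightarrow> measure lborel (Q r) = (2*r)^n" for r
    unfolding Q_def n_def by (rule box_meas)
  have Qmem: "z \<in> Q r \<longleftrightarrow> (\<forall>b\<in>Basis. \<bar>z \<bullet> b\<bar> \<le> r)" for z r
    unfolding Q_def by (rule box_mem)
  define I where "I k = (LINT z|lborel. indicator (Q (real k)) z * G z)" for k :: nat
  have "I \<longlonglongrightarrow> 1"
    using step1[OF G_nonneg G_L1] G_int unfolding I_def Q_def by simp
  from order_tendstoD(1)[OF this eps(2)] obtain k where k: "I k > \<epsilon>"
    by (auto simp: eventually_sequentially)
  define s where "s = real k"
  define Is where "Is = I k"
  have s0: "0 \<le> s" unfolding s_def by simp
  have Is: "Is > \<epsilon>" using k unfolding Is_def .
  have "((\<lambda>R. (1 - s / R)^n * Is) \<longlongrightarrow> (1 - 0)^n * Is) at_top"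
    by (intro tendsto_intros tendsto_divide_0[OF tendsto_const] filterlim_at_top_imp_at_infinity filterlim_ident)
  then have "eventually (\<lambda>R. (1 - s / R)^n * Is > \<epsilon>) at_top"
    using Is by (intro order_tendstoD(1)) auto
  moreover have "eventually (\<lambda>R. R > s + 1) at_top" by (rule eventually_gt_at_top)
  ultimately obtain R where R: "(1 - s / R)^n * Is > \<epsilon>" "R > s + 1"
    using eventually_happens' [OF trivial_limit_at_top_linorder] by (metis (mono_tags, lifting) eventually_conj_iff eventually_happens')
  have R0: "R > 0" using R s0 by linarith
  define V where "V = (2*R)^n"
  have V0: "V > 0" unfolding V_def using R0 by simp
  define \<rho> where "\<rho> x = indicator (Q R) x / V" for x
  have [measurable]: "\<rho> \<in> borel_measurable lborel" unfolding \<rho>_def by simp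
  have QRfin: "emeasure lborel (Q R) < \<infinity>" unfolding Q_def by (rule emeasure_lborel_cbox_finite)
  have intQ: "integrable lborel (indicator (Q R) :: 'a \<Rightarrow> real)"
    using integrable_indicator[OF Qm QRfin, of "1::real"] by simp
  have int\<rho>: "integrable lborel \<rho>" unfolding \<rho>_def using intQ by simp
  have "(LINT x|lborel. \<rho> x) = measure lborel (Q R) / V"
    unfolding \<rho>_def by simp
  then have I\<rho>: "(LINT x|lborel. \<rho> x) = 1" using Qmeas[of R] R0 V0 unfolding V_def by simp
  have sq: "(\<rho> x)\<^sup>2 = indicator (Q R) x / V^2" for x
    unfolding \<rho>_def by (simp add: indicator_def power_divide)
  have int\<rho>2: "integrable lborel (\<lambda>x. (\<rho> x)\<^sup>2)" unfolding sq using intQ by simp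
  have I\<rho>2: "(LINT x|lborel. (\<rho> x)\<^sup>2) = 1 / V"
    unfolding sq using Qmeas[of R] R0 V0 unfolding V_def by (simp add: power2_eq_square)
  have adm: "adm_density \<rho>"
  proof -
    have "0 \<le> \<rho> x" for x unfolding \<rho>_def using V0 by simp
    then show ?thesis unfolding adm_density_def using int\<rho> I\<rho> int\<rho>2 by auto
  qed
  define J where "J x = (LINT y|lborel. indicator (Q R) y * G (x - y))" for x
  define F where "F x = (LINT y|lborel. G (x - y) * \<rho> x * \<rho> y)" for x
  have intGx: "integrable lborel (\<lambda>y. G (x - y))" for x by (rule trans_int(1)[OF G_L1])
  have intJx: "integrable lborel (\<lambda>y. indicator (Q R) y * G (x - y))" for x
    using integrable_real_mult_indicator[OF Qm intGx] by (simp add: mult.commute)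
  have FJ: "F x = \<rho> x / V * J x" for x
  proof -
    have "F x = (LINT y|lborel. (\<rho> x / V) * (indicator (Q R) y * G (x - y)))"
      unfolding F_def by (rule Bochner_Integration.integral_cong) (auto simp: \<rho>_def)
    also have "\<dots> = \<rho> x / V * J x" unfolding J_def by simp
    finally show ?thesis .
  qed
  have J0: "0 \<le> J x" for x unfolding J_def
    using G_nonneg by (intro Bochner_Integration.integral_nonneg) auto
  have J1: "J x \<le> 1" for x
  proof -
    have "J x \<le> (LINT y|lborel. G (x - y))" unfolding J_def
      by (rule integral_mono[OF intJx intGx]) (use G_nonneg in \<open>auto simp: indicator_def\<close>)
    also have "\<dots> = 1" using trans_int(2)[OF G_L1] G_int by simp
    finally show ?thesis .
  qed
  define h where "h z = indicator (Q s) z * G z" for z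
  have inth: "integrable lborel h" unfolding h_def
    using integrable_real_mult_indicator[OF Qm G_L1] by (simp add: mult.commute)
  have Ish: "Is = (LINT z|lborel. h z)" unfolding Is_def I_def h_def s_def ..
  have Jlow: "J x \<ge> Is" if x: "x \<in> Q (R - s)" for x
  proof -
    have "Is = (LINT y|lborel. h (x - y))" using trans_int(2)[OF inth] Ish by simp
    also have "\<dots> \<le> J x" unfolding J_def
    proof (rule integral_mono[OF trans_int(1)[OF inth] intJx])
      fix y
      have "indicator (Q s) (x - y) \<le> (indicator (Q R) y :: real)"
      proof (cases "x - y \<in> Q s")
        case True
        have "y \<in> Q R" unfolding Qmem
        proof
          fix b :: 'a assume b: "b \<in> Basis"
          have "\<bar>x \<bullet> b\<bar> \<le> R - s" using x b Qmem by blast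
          moreover have "\<bar>(x - y) \<bullet> b\<bar> \<le> s" using True b Qmem by blast
          ultimately show "\<bar>y \<bullet> b\<bar> \<le> R" by (simp add: inner_diff_left)
        qed
        then show ?thesis by simp
      qed simp
      then show "h (x - y) \<le> indicator (Q R) y * G (x - y)"
        unfolding h_def using G_nonneg by (simp add: mult_right_mono)
    qed
    finally show ?thesis .
  qed
  define L where "L x = indicator (Q (R - s)) x * (Is / V^2)" for x
  have QsubR: "Q (R - s) \<subseteq> Q R"
  proof
    fix x assume "x \<in> Q (R - s)"
    then have "\<forall>b\<in>Basis. \<bar>x \<bullet> b\<bar> \<le> R - s" using Qmem by blast
    then have "\<forall>b\<in>Basis. \<bar>x \<bullet> b\<bar> \<le> R" using s0 by force
    then show "x \<in> Q R" using Qmem by blast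
  qed
  have FL: "L x \<le> F x" for x
  proof (cases "x \<in> Q (R - s)")
    case True
    then have "x \<in> Q R" using QsubR by auto
    then have "F x = J x / V^2" unfolding FJ \<rho>_def by (simp add: power2_eq_square)
    then show ?thesis unfolding L_def using True Jlow[OF True] V0
      by (simp add: divide_right_mono)
  next
    case False
    have "0 \<le> F x" unfolding FJ using J0 V0 by (simp add: \<rho>_def)
    then show ?thesis unfolding L_def using False by simp
  qed
  have Fm: "F \<in> borel_measurable lborel" unfolding F_def by measurable
  have intF: "integrable lborel F"
  proof (rule Bochner_Integration.integrable_bound[where f="\<lambda>x. indicator (Q R) x / V^2"])
    show "integrable lborel (\<lambda>x. indicator (Q R) x / V^2 :: real)" using intQ by simp
    show "F \<in> borel_measurable lborel" by (rule Fm)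
    show "AE x in lborel. norm (F x) \<le> norm (indicator (Q R) x / V^2 :: real)"
    proof (rule AE_I2)
      fix x
      have "norm (F x) = indicator (Q R) x / V^2 * J x"
        unfolding FJ \<rho>_def using J0 V0 by (simp add: power2_eq_square)
      also have "\<dots> \<le> indicator (Q R) x / V^2 * 1"
        by (rule mult_left_mono[OF J1]) (use V0 in simp)
      also have "\<dots> = indicator (Q R) x / V^2" by simp
      finally show "norm (F x) \<le> norm (indicator (Q R) x / V^2 :: real)" by simp
    qed
  qed
  have QRsfin: "emeasure lborel (Q (R - s)) < \<infinity>" unfolding Q_def by (rule emeasure_lborel_cbox_finite)
  have intL: "integrable lborel L" unfolding L_def
    using integrable_indicator[OF Qm QRsfin, of "Is / V^2"] by simp
  have "(LINT x|lborel. L x) = measure lborel (Q (R - s)) * (Is / V^2)"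
    unfolding L_def by simp
  also have "\<dots> = (2*(R-s))^n * (Is / V^2)" using Qmeas[of "R - s"] R by simp
  finally have IL: "(LINT x|lborel. L x) = (2*(R-s))^n * (Is / V^2)" .
  have "(LINT x|lborel. L x) \<le> (LINT x|lborel. F x)"
    by (rule integral_mono[OF intL intF FL])
  then have IF: "(2*(R-s))^n * (Is / V^2) \<le> (LINT x|lborel. F x)" using IL by simp
  have q1: "1 - s / R = (2*(R-s)) / (2*R)" using R0 by (simp add: field_simps)
  have q: "(2*(R-s))^n = (1 - s / R)^n * V"
    unfolding q1 V_def power_divide using R0 by simp
  have "energy \<epsilon> G \<rho> = \<epsilon> / 2 * (1 / V) - 1/2 * (LINT x|lborel. F x)"
    unfolding energy_def I\<rho>2 F_def ..
  also have "\<dots> \<le> \<epsilon> / 2 * (1 / V) - 1/2 * ((2*(R-s))^n * (Is / V^2))"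
    using IF by simp
  also have "\<dots> = (\<epsilon> - (1 - s / R)^n * Is) / (2 * V)"
    unfolding q using V0 by (simp add: divide_simps power2_eq_square)
  also have "\<dots> < 0" using R(1) V0 by (simp add: divide_neg_pos)
  finally show ?thesis using adm by blast
qed

end
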